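(* Let $a>0$ and $0\le r_0<a$, and consider, in polar coordinates $(r,\theta)$ about a pole $O$, the circle of radius $a$ whose centre $C$ has polar coordinates $(r_0,\theta_0)$, so that the ray from $O$ in direction $\theta$ meets the circle at distance $$r(\theta)=r_0\cos(\theta-\theta_0)+\sqrt{a^2-r_0^2\sin^2(\theta-\theta_0)} .$$ Let $\theta_1<\theta_2<\theta_3<\theta_4<\theta_1+\pi$, set $\theta_{i+4}=\theta_i+\pi$ for $i=1,2,3,4$ and $\theta_9=\theta_1+2\pi$, and for $1\le i\le 8$ let $S_i=\frac12\int_{\theta_i}^{\theta_{i+1}} r(\theta)^2\,d\theta$ (the area of the $i$-th of the eight sectors cut from the disc by the four lines through $O$ in directions $\theta_1,\dots,\theta_4$). Suppose that $$(\theta_2-\theta_1)+(\theta_4-\theta_3)=\frac{\pi}{2}$$ and $$\sin 2(\theta_4-\theta_0)+\sin 2(\theta_2-\theta_0)=\sin 2(\theta_3-\theta_0)+\sin 2(\theta_1-\theta_0).$$ Then $$S_1+S_3+S_5+S_7=\frac{\pi}{2}a^2=S_2+S_4+S_6+S_8 .$$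
   Context: Polar coordinates are taken about the pole $O$; the point with polar coordinates $(r,\theta)$ is $O+r(\cos\theta,\sin\theta)$. The sector $S_i$ is the region $\{O+\rho(\cos\theta,\sin\theta):\ \theta_i\le\theta\le\theta_{i+1},\ 0\le\rho\le r(\theta)\}$. *)

theory Defs
  imports "HOL-Analysis.Analysis"
begin

definition ray_radius :: "real \<Rightarrow> real \<Rightarrow> real \<Rightarrow> real \<Rightarrow> real" where
  "ray_radius a r0 th0 th = r0 * cos (th - th0) + sqrt (a^2 - r0^2 * (sin (th - th0))^2)"

definition ext_angle :: "(nat \<Rightarrow> real) \<Rightarrow> nat \<Rightarrow> real" where
  "ext_angle th i = (if i \<le> 4 then th i else if i \<le> 8 then th (i - 4) + pi else th 1 + 2 * pi)"

definition sector_area :: "real \<Rightarrow> real \<Rightarrow> real \<Rightarrow> (nat \<Rightarrow> real) \<Rightarrow> nat \<Rightarrow> real" where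
  "sector_area a r0 th0 th i =
     (1/2) * integral {ext_angle th i .. ext_angle th (Suc i)} (\<lambda>t. (ray_radius a r0 th0 t)^2)"

end

theory Submission
  imports Defs
begin

lemma rr_pair:
  assumes "r0 < a" "0 \<le> r0"
  shows "(ray_radius a r0 th0 t)^2 + (ray_radius a r0 th0 (t+pi))^2 = 2*a^2 + 2*r0^2*cos(2*(t-th0))"
proof -
  have c: "cos (t + pi - th0) = - cos (t - th0)" and s: "sin (t + pi - th0) = - sin (t - th0)"
    by (simp_all add: algebra_simps cos_add sin_add cos_diff sin_diff)
  have "(sin (t-th0))^2 \<le> 1" using sin_cos_squared_add[of "t-th0"] zero_le_power2[of "cos (t-th0)"] by linarith
  hence "r0^2 * (sin (t-th0))^2 \<le> r0^2" by (simp add: mult_left_le)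
  moreover have "r0^2 < a^2" using assms by (simp add: power_strict_mono)
  ultimately have nn: "0 \<le> a^2 - r0^2 * (sin (t-th0))^2" by linarith
  have sq: "(sqrt (a^2 - r0^2 * (sin (t-th0))^2))^2 = a^2 - r0^2 * (sin (t-th0))^2"
    using nn by simp
  have cd: "cos(2*(t-th0)) = (cos (t-th0))^2 - (sin (t-th0))^2" by (rule cos_double)
  have "(ray_radius a r0 th0 t)^2 + (ray_radius a r0 th0 (t+pi))^2
     = (r0 * cos (t-th0) + sqrt (a^2 - r0^2 * (sin (t-th0))^2))^2 + (- (r0 * cos (t-th0)) + sqrt (a^2 - r0^2 * (sin (t-th0))^2))^2"
    unfolding ray_radius_def c s by simp
  also have "\<dots> = 2 * (r0 * cos (t-th0))^2 + 2 * (sqrt (a^2 - r0^2 * (sin (t-th0))^2))^2"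
    by algebra
  also have "\<dots> = 2 * r0^2 * (cos (t-th0))^2 + 2 * (a^2 - r0^2 * (sin (t-th0))^2)"
    unfolding sq by (simp add: power_mult_distrib)
  also have "\<dots> = 2*a^2 + 2*r0^2*cos(2*(t-th0))" unfolding cd by (simp add: algebra_simps)
  finally show ?thesis .
qed

lemma rr_cont: "continuous_on S (\<lambda>t. (ray_radius a r0 th0 t)^2)"
  unfolding ray_radius_def by (intro continuous_intros)

lemma pair_int:
  assumes "r0 < a" "0 \<le> r0" "c \<le> d"
  shows "integral {c..d} (\<lambda>t. (ray_radius a r0 th0 t)^2)
       + integral {c+pi..d+pi} (\<lambda>t. (ray_radius a r0 th0 t)^2)
       = 2*a^2*(d-c) + r0^2*(sin(2*(d-th0)) - sin(2*(c-th0)))"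
proof -
  let ?R = "\<lambda>t. (ray_radius a r0 th0 t)^2"
  have sh: "integral {c+pi..d+pi} ?R = integral {c..d} (\<lambda>t. ?R (t+pi))"
    using integral_shift_Icc_real[of c d ?R pi] by (simp add: o_def add.commute)
  have i1: "?R integrable_on {c..d}" by (intro integrable_continuous_interval rr_cont)
  have i2: "(\<lambda>t. ?R (t+pi)) integrable_on {c..d}"
    unfolding ray_radius_def by (intro integrable_continuous_interval continuous_intros)
  have "integral {c..d} ?R + integral {c..d} (\<lambda>t. ?R (t+pi))
      = integral {c..d} (\<lambda>t. ?R t + ?R (t+pi))"
    using integral_add[OF i1 i2] by simp
  also have "\<dots> = integral {c..d} (\<lambda>t. 2*a^2 + 2*r0^2*cos(2*(t-th0)))"
    using rr_pair[OF assms(1,2)] by simp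
  also have "\<dots> = (2 * a^2 * d + r0^2 * sin (2*(d-th0))) - (2 * a^2 * c + r0^2 * sin (2*(c-th0)))"
  proof (rule integral_unique)
    define F where "F = (\<lambda>t. 2 * a^2 * t + r0^2 * sin (2*(t-th0)))"
    have deriv: "\<And>x. x \<in> {c..d} \<Longrightarrow> (F has_vector_derivative
            (\<lambda>t. 2*a^2 + 2*r0^2*cos(2*(t-th0))) x) (at x within {c..d})"
        unfolding has_real_derivative_iff_has_vector_derivative[symmetric] F_def
        by (auto intro!: derivative_eq_intros)
    have "((\<lambda>t. 2*a^2 + 2*r0^2*cos(2*(t-th0))) has_integral (F d - F c)) {c..d}"
      by (rule fundamental_theorem_of_calculus[OF assms(3) deriv])
    thus "((\<lambda>t. 2*a^2 + 2*r0^2*cos(2*(t-th0))) has_integral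
      (2 * a^2 * d + r0^2 * sin (2*(d-th0))) - (2 * a^2 * c + r0^2 * sin (2*(c-th0)))) {c..d}"
      by (simp add: F_def)
  qed
  finally show ?thesis using sh by (simp add: algebra_simps)
qed

theorem mainTheorem2:
  fixes a r0 th0 :: real and th :: "nat \<Rightarrow> real"
  assumes "a > 0" and "0 \<le> r0" and "r0 < a"
    and "th 1 < th 2" and "th 2 < th 3" and "th 3 < th 4" and "th 4 < th 1 + pi"
    and "(th 2 - th 1) + (th 4 - th 3) = pi / 2"
    and "sin (2 * (th 4 - th0)) + sin (2 * (th 2 - th0))
           = sin (2 * (th 3 - th0)) + sin (2 * (th 1 - th0))"
  shows "sector_area a r0 th0 th 1 + sector_area a r0 th0 th 3
           + sector_area a r0 th0 th 5 + sector_area a r0 th0 th 7 = pi / 2 * a^2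
       \<and> sector_area a r0 th0 th 2 + sector_area a r0 th0 th 4
           + sector_area a r0 th0 th 6 + sector_area a r0 th0 th 8 = pi / 2 * a^2"
proof -
  let ?R = "\<lambda>t. (ray_radius a r0 th0 t)^2"
  have s1: "sin (2 * (th 1 + pi - th0)) = sin (2 * (th 1 - th0))"
  proof -
    have "2 * (th 1 + pi - th0) = 2 * (th 1 - th0) + 2*pi" by (simp add: algebra_simps)
    moreover have "sin (2 * (th 1 - th0) + 2*pi) = sin (2 * (th 1 - th0))" by (rule sin_periodic)
    ultimately show ?thesis by metis
  qed
  have S1: "sector_area a r0 th0 th 1 = 1/2 * integral {th 1..th 2} ?R" by (simp add: sector_area_def ext_angle_def eval_nat_numeral)
  have S2: "sector_area a r0 th0 th 2 = 1/2 * integral {th 2..th 3} ?R" by (simp add: sector_area_def ext_angle_def eval_nat_numeral)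
  have S3: "sector_area a r0 th0 th 3 = 1/2 * integral {th 3..th 4} ?R" by (simp add: sector_area_def ext_angle_def eval_nat_numeral)
  have S4: "sector_area a r0 th0 th 4 = 1/2 * integral {th 4..th 1 + pi} ?R" by (simp add: sector_area_def ext_angle_def eval_nat_numeral)
  have S5: "sector_area a r0 th0 th 5 = 1/2 * integral {th 1+pi..th 2+pi} ?R" by (simp add: sector_area_def ext_angle_def eval_nat_numeral)
  have S6: "sector_area a r0 th0 th 6 = 1/2 * integral {th 2+pi..th 3+pi} ?R" by (simp add: sector_area_def ext_angle_def eval_nat_numeral)
  have S7: "sector_area a r0 th0 th 7 = 1/2 * integral {th 3+pi..th 4+pi} ?R" by (simp add: sector_area_def ext_angle_def eval_nat_numeral)
  have S8: "sector_area a r0 th0 th 8 = 1/2 * integral {th 4+pi..th 1+2*pi} ?R" by (simp add: sector_area_def ext_angle_def eval_nat_numeral)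
  have P1: "integral {th 1..th 2} ?R + integral {th 1+pi..th 2+pi} ?R = 2*a^2*(th 2 - th 1) + r0^2*(sin(2*(th 2-th0)) - sin(2*(th 1-th0)))"
    using assms by (intro pair_int) auto
  have P2: "integral {th 3..th 4} ?R + integral {th 3+pi..th 4+pi} ?R = 2*a^2*(th 4 - th 3) + r0^2*(sin(2*(th 4-th0)) - sin(2*(th 3-th0)))"
    using assms by (intro pair_int) auto
  have P3: "integral {th 2..th 3} ?R + integral {th 2+pi..th 3+pi} ?R = 2*a^2*(th 3 - th 2) + r0^2*(sin(2*(th 3-th0)) - sin(2*(th 2-th0)))"
    using assms by (intro pair_int) auto
  have P4: "integral {th 4..th 1 + pi} ?R + integral {th 4+pi..th 1+2*pi} ?R = 2*a^2*(th 1 + pi - th 4) + r0^2*(sin(2*(th 1 + pi-th0)) - sin(2*(th 4-th0)))"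
  proof -
    have eq: "th 1 + pi + pi = th 1 + 2*pi" by simp
    have "th 4 \<le> th 1 + pi" using assms by simp
    from pair_int[OF assms(3) assms(2) this, of th0] show ?thesis unfolding eq .
  qed
  have h1: "r0^2*(sin(2*(th 2-th0)) - sin(2*(th 1-th0))) + r0^2*(sin(2*(th 4-th0)) - sin(2*(th 3-th0))) = 0"
  proof -
    have z: "(sin(2*(th 2-th0)) - sin(2*(th 1-th0))) + (sin(2*(th 4-th0)) - sin(2*(th 3-th0))) = 0" using assms(9) by linarith
    show ?thesis by (simp only: distrib_left[symmetric] z mult_zero_right)
  qed
  have h2: "r0^2*(sin(2*(th 3-th0)) - sin(2*(th 2-th0))) + r0^2*(sin(2*(th 1 + pi-th0)) - sin(2*(th 4-th0))) = 0"
  proof -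
    have z: "(sin(2*(th 3-th0)) - sin(2*(th 2-th0))) + (sin(2*(th 1 + pi-th0)) - sin(2*(th 4-th0))) = 0" using assms(9) s1 by linarith
    show ?thesis by (simp only: distrib_left[symmetric] z mult_zero_right)
  qed
  have h3: "2*a^2*(th 2 - th 1) + 2*a^2*(th 4 - th 3) = pi * a^2"
  proof -
    have "2*a^2*((th 2 - th 1) + (th 4 - th 3)) = pi * a^2" unfolding assms(8) by simp
    thus ?thesis by (simp only: distrib_left)
  qed
  have h4: "2*a^2*(th 3 - th 2) + 2*a^2*(th 1 + pi - th 4) = pi * a^2"
  proof -
    have e: "(th 3 - th 2) + (th 1 + pi - th 4) = pi/2" using assms(8) by linarith
    have "2*a^2*((th 3 - th 2) + (th 1 + pi - th 4)) = pi * a^2" unfolding e by simp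
    thus ?thesis by (simp only: distrib_left)
  qed
  show ?thesis unfolding S1 S2 S3 S4 S5 S6 S7 S8 using P1 P2 P3 P4 h1 h2 h3 h4 by linarith
qed

end
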